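(* Consider markets with scalar single-parameter valuations: $n$ agents, an unlimited supply of a good (at most one copy per agent), agent $i$ has private type $t_i\in[0,\infty)$ and valuation $v_i(t_i,S)=t_i\,w_i(S)$ for winning sets $S\subseteq[n]$, with publicly known $w_i:2^{[n]}\to\mathbb{R}_{\ge0}$, $w_i(S)=0$ for $i\notin S$, and such that each $v_i(t_i,\cdot)$ is monotone ($v_i(t_i,S)\le v_i(t_i,R)$ for $S\subseteq R$) and subadditive ($v_i(t_i,S\cup R)\le v_i(t_i,S)+v_i(t_i,R)$ whenever $i\in S\cap R$). Then there is no universally truthful mechanism achieving a constant approximation ratio with respect to $\mathcal{F}^{(2)}$: for every constant $\alpha\ge1$ there exist $n$ and such public functions $w_1,\dots,w_n$ such that no universally truthful mechanism $\mathcal{M}$ satisfies $\mathbb{E}[\mathrm{Rev}_{\mathcal{M}}(t)]\ge \mathcal{F}^{(2)}(t)/\alpha$ for all $t\in[0,\infty)^n$.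
   Context: A deterministic mechanism maps the reported type vector $t$ to a winning set $S$ and prices $p_i$ for $i\in S$ (agents outside $S$ pay $0$); agent $i$'s utility is $v_i(t_i,S)-p_i$ if $i\in S$ and $0$ otherwise, and $\mathrm{Rev}$ is $\sum_{i\in S}p_i$. It is truthful if for every $i$ and every fixed reports of the others, reporting the true type maximizes $i$'s utility, and individually rational (voluntary participation) if truthful agents always have nonnegative utility. A universally truthful mechanism is a probability distribution over deterministic truthful, individually rational mechanisms. $\mathcal{F}^{(2)}(t)=\max\{c|S| : c\ge0,\ S\subseteq[n],\ |S|\ge 2,\ v_i(t_i,S)\ge c\ \forall i\in S\}$. *)

theory Defs
  imports "HOL-Probability.Probability"
begin

text \<open>Agents are 0,...,n-1. A type vector is an extensional function on agents.\<close>

type_synonym tvec = "nat \<Rightarrow> real"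

text \<open>A deterministic mechanism: winning-set rule and price rule.\<close>
type_synonym mech = "(tvec \<Rightarrow> nat set) \<times> (tvec \<Rightarrow> nat \<Rightarrow> real)"

definition type_space :: "nat \<Rightarrow> tvec set" where
  "type_space n = {..<n} \<rightarrow>\<^sub>E {0::real..}"

definition val :: "(nat \<Rightarrow> nat set \<Rightarrow> real) \<Rightarrow> nat \<Rightarrow> real \<Rightarrow> nat set \<Rightarrow> real" where
  "val w i x S = x * w i S"

definition valid_weights :: "nat \<Rightarrow> (nat \<Rightarrow> nat set \<Rightarrow> real) \<Rightarrow> bool" where
  "valid_weights n w \<longleftrightarrow>
     (\<forall>i<n. \<forall>S. S \<subseteq> {..<n} \<longrightarrow> w i S \<ge> 0) \<and>
     (\<forall>i<n. \<forall>S. S \<subseteq> {..<n} \<longrightarrow> i \<notin> S \<longrightarrow> w i S = 0) \<and>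
     (\<forall>i<n. \<forall>x\<ge>0. \<forall>S R. S \<subseteq> R \<longrightarrow> R \<subseteq> {..<n} \<longrightarrow> val w i x S \<le> val w i x R) \<and>
     (\<forall>i<n. \<forall>x\<ge>0. \<forall>S R. S \<subseteq> {..<n} \<longrightarrow> R \<subseteq> {..<n} \<longrightarrow> i \<in> S \<inter> R \<longrightarrow>
         val w i x (S \<union> R) \<le> val w i x S + val w i x R)"

text \<open>Utility of agent i with true type x when the reported vector is t.\<close>
definition utility :: "(nat \<Rightarrow> nat set \<Rightarrow> real) \<Rightarrow> mech \<Rightarrow> nat \<Rightarrow> real \<Rightarrow> tvec \<Rightarrow> real" where
  "utility w m i x t = (if i \<in> fst m t then val w i x (fst m t) - snd m t i else 0)"

definition revenue :: "mech \<Rightarrow> tvec \<Rightarrow> real" where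
  "revenue m t = (\<Sum>i\<in>fst m t. snd m t i)"

definition truthful_IR :: "nat \<Rightarrow> (nat \<Rightarrow> nat set \<Rightarrow> real) \<Rightarrow> mech \<Rightarrow> bool" where
  "truthful_IR n w m \<longleftrightarrow>
     (\<forall>t\<in>type_space n. fst m t \<subseteq> {..<n}) \<and>
     (\<forall>t\<in>type_space n. \<forall>i<n. \<forall>x\<ge>0.
         utility w m i (t i) (t(i := x)) \<le> utility w m i (t i) t) \<and>
     (\<forall>t\<in>type_space n. \<forall>i<n. 0 \<le> utility w m i (t i) t)"

text \<open>A universally truthful mechanism: a probability distribution over deterministic
  truthful, individually rational mechanisms (revenue measurable so its expectation makes sense).\<close>
definition universally_truthful :: "nat \<Rightarrow> (nat \<Rightarrow> nat set \<Rightarrow> real) \<Rightarrow> mech measure \<Rightarrow> bool" where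
  "universally_truthful n w M \<longleftrightarrow>
     prob_space M \<and> (\<forall>m\<in>space M. truthful_IR n w m) \<and>
     (\<forall>t\<in>type_space n. (\<lambda>m. revenue m t) \<in> borel_measurable M)"

definition F2 :: "nat \<Rightarrow> (nat \<Rightarrow> nat set \<Rightarrow> real) \<Rightarrow> tvec \<Rightarrow> real" where
  "F2 n w t = Sup {c * real (card S) | c S. c \<ge> 0 \<and> S \<subseteq> {..<n} \<and> card S \<ge> 2 \<and>
                      (\<forall>i\<in>S. val w i (t i) S \<ge> c)}"

end

theory Submission
  imports Defs
begin

definition w2 :: "nat \<Rightarrow> nat set \<Rightarrow> real" where
  "w2 i S = (if S = {0,1} then 1 else 0)"

definition pt :: "real \<Rightarrow> real \<Rightarrow> tvec" where
  "pt a b = (\<lambda>i. if i = 0 then a else if i = 1 then b else undefined)"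

lemma lt2: "{..<2::nat} = {0,1}" by auto

lemma pt_type: "a \<ge> 0 \<Longrightarrow> b \<ge> 0 \<Longrightarrow> pt a b \<in> type_space 2"
  unfolding type_space_def pt_def PiE_def extensional_def by auto

lemma pt_upd0: "(pt a b)(0 := x) = pt x b" unfolding pt_def by auto
lemma pt_upd1: "(pt a b)(1 := x) = pt a x" unfolding pt_def by auto
lemma pt0[simp]: "pt a b 0 = a" unfolding pt_def by auto
lemma pt1[simp]: "pt a b 1 = b" unfolding pt_def by auto
lemma pt1s[simp]: "pt a b (Suc 0) = b" unfolding pt_def by auto

lemma sub_single: assumes "S \<subseteq> {0::nat,1}" "i \<in> S" "S \<noteq> {0,1}" shows "S = {i}"
proof -
  have "j = i" if "j \<in> S" for j
  proof (rule ccontr)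
    assume "j \<noteq> i"
    have "i \<in> {0,1}" "j \<in> {0,1}" using assms(1,2) that by auto
    then have "{0,1} \<subseteq> S" using \<open>j \<noteq> i\<close> assms(2) that by auto
    then show False using assms(1,3) by blast
  qed
  then show ?thesis using assms(2) by blast
qed

lemma valid: "valid_weights 2 w2"
proof -
  have A: "\<forall>i<2. \<forall>S. S \<subseteq> {..<2} \<longrightarrow> w2 i S \<ge> 0" unfolding w2_def by simp
  have B: "\<forall>i<2. \<forall>S. S \<subseteq> {..<2::nat} \<longrightarrow> i \<notin> S \<longrightarrow> w2 i S = 0"
  proof (intro allI impI)
    fix i S assume "i < (2::nat)" "S \<subseteq> {..<2::nat}" "i \<notin> S"
    then have "i \<in> {0,1}" by auto
    then have "S \<noteq> {0,1}" using \<open>i \<notin> S\<close> by blast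
    then show "w2 i S = 0" unfolding w2_def by simp
  qed
  have C: "\<forall>i<2. \<forall>x\<ge>0. \<forall>S R. S \<subseteq> R \<longrightarrow> R \<subseteq> {..<2::nat} \<longrightarrow> val w2 i x S \<le> val w2 i x R"
  proof (intro allI impI)
    fix i x S R assume a: "i < (2::nat)" "(0::real) \<le> x" "S \<subseteq> R" "R \<subseteq> {..<2::nat}"
    show "val w2 i x S \<le> val w2 i x R"
    proof (cases "S = {0,1}")
      case True
      then have "R = {0,1}" using a(3,4) lt2 by blast
      then show ?thesis using True unfolding val_def w2_def by simp
    next
      case False
      then show ?thesis using a(2) unfolding val_def w2_def by simp
    qed
  qed
  have D: "\<forall>i<2. \<forall>x\<ge>0. \<forall>S R. S \<subseteq> {..<2::nat} \<longrightarrow> R \<subseteq> {..<2} \<longrightarrow> i \<in> S \<inter> R \<longrightarrow>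
         val w2 i x (S \<union> R) \<le> val w2 i x S + val w2 i x R"
  proof (intro allI impI)
    fix i x S R assume a: "i < (2::nat)" "(0::real) \<le> x" "S \<subseteq> {..<2::nat}" "R \<subseteq> {..<2}"
      "i \<in> S \<inter> R"
    show "val w2 i x (S \<union> R) \<le> val w2 i x S + val w2 i x R"
    proof (cases "S = {0,1} \<or> R = {0,1}")
      case True then show ?thesis using a(2) unfolding val_def w2_def by auto
    next
      case False
      then have "S = {i}" "R = {i}" using sub_single a lt2 by auto
      then have "S \<union> R \<noteq> {0,1}" by auto
      then show ?thesis using a(2) unfolding val_def w2_def by simp
    qed
  qed
  show ?thesis unfolding valid_weights_def using A B C D by blast
qed

lemma F2_ge: assumes "s \<ge> 0" shows "F2 2 w2 (pt s s) \<ge> 2* s"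
proof -
  let ?A = "{c * real (card S) | c S. c \<ge> 0 \<and> S \<subseteq> {..<2} \<and> card S \<ge> 2 \<and>
                      (\<forall>i\<in>S. val w2 i (pt s s i) S \<ge> c)}"
  have mem: "2* s \<in> ?A"
    apply (rule CollectI, rule exI[of _ s], rule exI[of _ "{0,1}"])
    using assms unfolding val_def w2_def pt_def by auto
  have bdd: "bdd_above ?A"
  proof (rule bdd_aboveI[of _ "2* s"])
    fix y assume "y \<in> ?A"
    then obtain c S where y: "y = c * real (card S)" "c \<ge> 0" "S \<subseteq> {..<2}" "card S \<ge> 2"
      "\<forall>i\<in>S. val w2 i (pt s s i) S \<ge> c" by blast
    have "S \<noteq> {}" using y(4) by auto
    then obtain i where i: "i \<in> S" by auto
    have "i < 2" using i y(3) by auto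
    then have "pt s s i = s" unfolding pt_def by auto
    then have "c \<le> s" using y(5) i assms unfolding val_def w2_def by (auto split: if_splits)
    have "card S \<le> card {..<2::nat}" by (rule card_mono) (use y(3) in auto)
    then have "real (card S) \<le> 2" by simp
    then show "y \<le> 2* s" using y(1,2) \<open>c \<le> s\<close>
      by (metis assms mult.commute mult_mono of_nat_0_le_iff)
  qed
  show ?thesis unfolding F2_def using cSup_upper[OF mem bdd] by simp
qed

lemma mech_bound:
  assumes tr: "truthful_IR 2 w2 m" and q: "q \<ge> 2"
  shows "(\<Sum>k<K. revenue m (pt (1/q^k) (1/q^k)) / (1/q^k)) \<le> 2*real K/q + 2"
proof -
  define \<sigma> where "\<sigma> a b = (fst m (pt a b) = {0,1})" for a b
  define \<pi> where "\<pi> i a b = (if i \<in> fst m (pt a b) then snd m (pt a b) i else 0)" for i a b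
  define ind where "ind a b = (if \<sigma> a b then 1 else 0::real)" for a b
  have util: "utility w2 m i x (pt a b) = x * ind a b - \<pi> i a b" if "i \<in> {0,1}" for i x a b
    using that unfolding utility_def val_def w2_def \<pi>_def ind_def \<sigma>_def by auto
  have sub: "fst m (pt a b) \<subseteq> {0,1}" if "a \<ge> 0" "b \<ge> 0" for a b
    using tr pt_type[OF that] unfolding truthful_IR_def lt2 by blast
  have rev: "revenue m (pt a b) = \<pi> 0 a b + \<pi> 1 a b" if "a \<ge> 0" "b \<ge> 0" for a b
  proof -
    have "revenue m (pt a b) = sum (snd m (pt a b)) ({0,1} \<inter> fst m (pt a b))"
      unfolding revenue_def using sub[OF that] by (simp add: Int_absorb1)
    also have "\<dots> = (\<Sum>i\<in>{0,1::nat}. \<pi> i a b)"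
      unfolding \<pi>_def by (subst sum.inter_restrict) auto
    finally show ?thesis by simp
  qed
  have TR1: "\<forall>t\<in>type_space 2. \<forall>i<2. \<forall>x\<ge>0.
         utility w2 m i (t i) (t(i := x)) \<le> utility w2 m i (t i) t"
    using tr unfolding truthful_IR_def by blast
  have TR2: "\<forall>t\<in>type_space 2. \<forall>i<2. 0 \<le> utility w2 m i (t i) t"
    using tr unfolding truthful_IR_def by blast
  have IR0: "0 \<le> a * ind a b - \<pi> 0 a b" if "a \<ge> 0" "b \<ge> 0" for a b
  proof -
    have "0 \<le> utility w2 m 0 (pt a b 0) (pt a b)" using bspec[OF TR2 pt_type[OF that], rule_format, of 0] by simp
    then show ?thesis using util[of 0 a a b] by simp
  qed
  have IR1: "0 \<le> b * ind a b - \<pi> 1 a b" if "a \<ge> 0" "b \<ge> 0" for a b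
  proof -
    have "0 \<le> utility w2 m 1 (pt a b 1) (pt a b)" using bspec[OF TR2 pt_type[OF that], rule_format, of 1] by simp
    then show ?thesis using util[of 1 b a b] by simp
  qed
  have IC0: "a * ind x b - \<pi> 0 x b \<le> a * ind a b - \<pi> 0 a b" if "a \<ge> 0" "b \<ge> 0" "x \<ge> 0" for a b x
  proof -
    have "utility w2 m 0 (pt a b 0) ((pt a b)(0 := x)) \<le> utility w2 m 0 (pt a b 0) (pt a b)"
      using bspec[OF TR1 pt_type[OF that(1,2)], rule_format, of 0 x] that(3) by simp
    then show ?thesis unfolding pt_upd0 using util[of 0 a x b] util[of 0 a a b] by simp
  qed
  have IC1: "b * ind a x - \<pi> 1 a x \<le> b * ind a b - \<pi> 1 a b" if "a \<ge> 0" "b \<ge> 0" "x \<ge> 0" for a b x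
  proof -
    have "utility w2 m 1 (pt a b 1) ((pt a b)(1 := x)) \<le> utility w2 m 1 (pt a b 1) (pt a b)"
      using bspec[OF TR1 pt_type[OF that(1,2)], rule_format, of 1 x] that(3) by simp
    then show ?thesis unfolding pt_upd1 using util[of 1 b a x] util[of 1 b a b] by simp
  qed
  have mono0: "\<sigma> a' b \<and> \<pi> 0 a' b = \<pi> 0 a b"
    if "\<sigma> a b" "0 \<le> a" "a \<le> a'" "0 \<le> b" for a a' b
  proof -
    have i1: "a' * ind a b - \<pi> 0 a b \<le> a' * ind a' b - \<pi> 0 a' b" using IC0[of a' b a] that by auto
    have i2: "a * ind a' b - \<pi> 0 a' b \<le> a * ind a b - \<pi> 0 a b" using IC0[of a b a'] that by auto
    have "ind a b = 1" using that(1) unfolding ind_def by simp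
    show ?thesis
    proof (cases "\<sigma> a' b")
      case True
      then have "ind a' b = 1" unfolding ind_def by simp
      then show ?thesis using i1 i2 True \<open>ind a b = 1\<close> by auto
    next
      case False
      then have "ind a' b = 0" unfolding ind_def by simp
      then have "a' \<le> a" using i1 i2 \<open>ind a b = 1\<close> by auto
      then have "a' = a" using that by auto
      then show ?thesis using that by auto
    qed
  qed
  have mono1: "\<sigma> a b' \<and> \<pi> 1 a b' = \<pi> 1 a b"
    if "\<sigma> a b" "0 \<le> b" "b \<le> b'" "0 \<le> a" for a b b'
  proof -
    have i1: "b' * ind a b - \<pi> 1 a b \<le> b' * ind a b' - \<pi> 1 a b'" using IC1[of a b' b] that by auto
    have i2: "b * ind a b' - \<pi> 1 a b' \<le> b * ind a b - \<pi> 1 a b" using IC1[of a b b'] that by auto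
    have "ind a b = 1" using that(1) unfolding ind_def by simp
    show ?thesis
    proof (cases "\<sigma> a b'")
      case True
      then have "ind a b' = 1" unfolding ind_def by simp
      then show ?thesis using i1 i2 True \<open>ind a b = 1\<close> by auto
    next
      case False
      then have "ind a b' = 0" unfolding ind_def by simp
      then have "b' \<le> b" using i1 i2 \<open>ind a b = 1\<close> by auto
      then have "b' = b" using that by auto
      then show ?thesis using that by auto
    qed
  qed
  have key: "\<sigma> s s \<and> revenue m (pt s s) \<le> 2 * s'"
    if "\<sigma> s' s'" "0 \<le> s'" "s' \<le> s" for s s'
  proof -
    have a1: "\<sigma> s s'" "\<pi> 0 s s' = \<pi> 0 s' s'" using mono0[OF that(1,2,3,2)] by auto
    have a2: "\<sigma> s s" "\<pi> 1 s s = \<pi> 1 s s'" using mono1[OF a1(1) that(2,3)] that by auto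
    have a3: "\<pi> 1 s s' \<le> s'" using IR1[of s s'] a1(1) that unfolding ind_def by auto
    have b1: "\<sigma> s' s" "\<pi> 1 s' s = \<pi> 1 s' s'" using mono1[OF that(1,2,3,2)] by auto
    have b2: "\<pi> 0 s s = \<pi> 0 s' s" using mono0[OF b1(1) that(2,3)] that by auto
    have b3: "\<pi> 0 s' s \<le> s'" using IR0[of s' s] b1(1) that unfolding ind_def by auto
    show ?thesis using rev[of s s] that a2 a3 b2 b3 by auto
  qed
  have served: "revenue m (pt s s) \<le> 2* s" if "s \<ge> 0" for s
    using rev[OF that that] IR0[OF that that] IR1[OF that that] that unfolding ind_def
    by (auto split: if_splits)
  have unserved: "revenue m (pt s s) \<le> 0" if "s \<ge> 0" "\<not> \<sigma> s s" for s
    using rev[OF that(1,1)] IR0[OF that(1,1)] IR1[OF that(1,1)] that unfolding ind_def by auto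
  define s where "s k = 1/q^k" for k :: nat
  have spos: "s k > 0" for k unfolding s_def using q by simp
  have sSuc: "s (Suc k) = s k / q" for k unfolding s_def by simp
  have sle: "s (Suc k) \<le> s k" for k unfolding sSuc using spos[of k] q
    by (simp add: divide_le_eq)
  define h where "h k = revenue m (pt (s k) (s k)) / s k" for k
  have claim: "(\<Sum>k<K. h k) \<le> 2*real K/q + 2 - 2 * ind (s K) (s K)" for K
  proof (induction K)
    case 0
    then show ?case unfolding ind_def by auto
  next
    case (Suc K)
    have sK: "s K > 0" "s (Suc K) > 0" using spos by auto
    show ?case
    proof (cases "\<sigma> (s (Suc K)) (s (Suc K))")
      case True
      then have k: "\<sigma> (s K) (s K)" "revenue m (pt (s K) (s K)) \<le> 2 * s (Suc K)"
        using key[OF True _ sle] sK by auto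
      have "h K \<le> 2 * s (Suc K) / s K" unfolding h_def using k(2) sK
        by (simp add: divide_right_mono)
      also have "\<dots> = 2 / q" unfolding sSuc using sK q by simp
      finally show ?thesis using Suc.IH k(1) True unfolding ind_def
        by (simp add: add_divide_distrib)
    next
      case False
      have "h K - 2 * ind (s K) (s K) \<le> 0"
      proof (cases "\<sigma> (s K) (s K)")
        case True
        have "h K \<le> 2" unfolding h_def using served[of "s K"] sK
          by (simp add: divide_le_eq)
        then show ?thesis using True unfolding ind_def by simp
      next
        case False
        have "h K \<le> 0" unfolding h_def using unserved[of "s K"] sK False
          by (simp add: divide_le_0_iff)
        then show ?thesis using False unfolding ind_def by simp
      qed
      moreover have "0 \<le> 2 / q" using q by simp
      moreover have "ind (s (Suc K)) (s (Suc K)) = 0" using False unfolding ind_def by simp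
      moreover have "2 * real (Suc K) / q = 2 * real K / q + 2 / q" by (simp add: add_divide_distrib distrib_left)
      moreover have "(\<Sum>k<Suc K. h k) = sum h {..<K} + h K" by simp
      ultimately show ?thesis using Suc.IH by linarith
    qed
  qed
  have "(\<Sum>k<K. h k) \<le> 2*real K/q + 2" using claim[of K] unfolding ind_def by (auto split: if_splits)
  then show ?thesis unfolding h_def s_def .
qed

theorem theorem3:
  fixes \<alpha> :: real
  assumes "\<alpha> \<ge> 1"
  shows "\<exists>n w. valid_weights n w \<and>
           \<not> (\<exists>M. universally_truthful n w M \<and>
                 (\<forall>t\<in>type_space n. (\<integral>m. revenue m t \<partial>M) \<ge> F2 n w t / \<alpha>))"
proof (intro exI conjI)
  show "valid_weights 2 w2" by (rule valid)
  show "\<not> (\<exists>M. universally_truthful 2 w2 M \<and>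
                 (\<forall>t\<in>type_space 2. (\<integral>m. revenue m t \<partial>M) \<ge> F2 2 w2 t / \<alpha>))"
  proof
    assume "\<exists>M. universally_truthful 2 w2 M \<and>
                 (\<forall>t\<in>type_space 2. (\<integral>m. revenue m t \<partial>M) \<ge> F2 2 w2 t / \<alpha>)"
    then obtain M where ut: "universally_truthful 2 w2 M"
      and bd: "\<forall>t\<in>type_space 2. (\<integral>m. revenue m t \<partial>M) \<ge> F2 2 w2 t / \<alpha>" by blast
    have ps: "prob_space M" and trm: "\<And>m. m \<in> space M \<Longrightarrow> truthful_IR 2 w2 m"
      using ut unfolding universally_truthful_def by auto
    define q where "q = 2*\<alpha>"
    have q: "q \<ge> 2" using assms unfolding q_def by simp
    define s where "s k = 1/q^k" for k :: nat
    have spos: "s k > 0" for k unfolding s_def using q by simp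
    define K where "K = nat \<lceil>2*\<alpha>\<rceil> + 1"
    have Kgt: "real K > 2*\<alpha>" unfolding K_def by linarith
    have lb: "(\<integral>m. revenue m (pt (s k) (s k)) \<partial>M) \<ge> 2 * s k / \<alpha>" for k
    proof -
      have "F2 2 w2 (pt (s k) (s k)) / \<alpha> \<ge> 2 * s k / \<alpha>"
        using F2_ge[of "s k"] spos[of k] assms by (simp add: divide_right_mono)
      then show ?thesis using bd pt_type[of "s k" "s k"] spos[of k] by force
    qed
    have int: "integrable M (\<lambda>m. revenue m (pt (s k) (s k)))" for k
    proof (rule ccontr)
      assume "\<not> ?thesis"
      then have "(\<integral>m. revenue m (pt (s k) (s k)) \<partial>M) = 0" by (rule not_integrable_integral_eq)
      moreover have "2 * s k / \<alpha> > 0" using spos[of k] assms by simp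
      ultimately show False using lb[of k] by simp
    qed
    have int2: "integrable M (\<lambda>m. revenue m (pt (s k) (s k)) / s k)" for k
      using int[of k] by simp
    have "(\<integral>m. (\<Sum>k<K. revenue m (pt (s k) (s k)) / s k) \<partial>M)
        = (\<Sum>k<K. (\<integral>m. revenue m (pt (s k) (s k)) / s k \<partial>M))"
      by (rule Bochner_Integration.integral_sum) (use int2 in auto)
    also have "\<dots> = (\<Sum>k<K. (\<integral>m. revenue m (pt (s k) (s k)) \<partial>M) / s k)" by simp
    also have "\<dots> \<ge> (\<Sum>k<K. 2 / \<alpha>)"
    proof (rule sum_mono)
      fix k assume "k \<in> {..<K}"
      have "2 / \<alpha> = (2 * s k / \<alpha>) / s k" using spos[of k] by simp
      also have "\<dots> \<le> (\<integral>m. revenue m (pt (s k) (s k)) \<partial>M) / s k"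
        by (rule divide_right_mono[OF lb[of k]]) (use spos[of k] in simp)
      finally show "2 / \<alpha> \<le> (\<integral>m. revenue m (pt (s k) (s k)) \<partial>M) / s k" .
    qed
    finally have ge0: "real K * (2 / \<alpha>) \<le> (\<integral>m. (\<Sum>k<K. revenue m (pt (s k) (s k)) / s k) \<partial>M)"
      by simp
    have ge: "2 * real K / \<alpha> \<le> (\<integral>m. (\<Sum>k<K. revenue m (pt (s k) (s k)) / s k) \<partial>M)"
      using ge0 by (simp add: mult.commute)
    have le: "(\<integral>m. (\<Sum>k<K. revenue m (pt (s k) (s k)) / s k) \<partial>M) \<le> 2*real K/q + 2"
      apply (rule prob_space.integral_le_const[OF ps])
      using int2 apply auto[1]
      apply (rule AE_I2)
      using mech_bound[OF trm q] unfolding s_def by blast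
    have "2 * real K / \<alpha> \<le> real K / \<alpha> + 2" using ge le unfolding q_def by simp
    then have "real K / \<alpha> \<le> 2" by simp
    then have "real K \<le> 2 * \<alpha>" using assms by (simp add: divide_le_eq)
    then show False using Kgt by simp
  qed
qed

end
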